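(* (1) Let $C$ be a binary Euclidean LCD $[n,k]$ code with generator matrix $G$, let $\mathbf{x}\in C^{\perp_E}$, and let $C'$ be the binary linear code with generator matrix $G'=\begin{pmatrix}1&\mathbf{x}\\ \mathbf{0}&G\end{pmatrix}$. If $wt(\mathbf{x})$ is even, then $C'$ is a binary Euclidean LCD $[n+1,k+1]$ code. (2) Let $C$ be a ternary Euclidean LCD $[n,k]$ code with generator matrix $G$, let $\mathbf{x}\in C^{\perp_E}$, and let $C'$ be the ternary linear code with generator matrix $G'=\begin{pmatrix}1&\mathbf{x}\\ \mathbf{0}&G\end{pmatrix}$. If $wt(\mathbf{x})\not\equiv 2 \pmod 3$, then $C'$ is a ternary Euclidean LCD $[n+1,k+1]$ code. (3) Let $C$ be a quaternary Hermitian LCD $[n,k]$ code with generator matrix $G$, let $\mathbf{x}\in C^{\perp_H}$, and let $C'$ be the quaternary linear code with generator matrix $G'=\begin{pmatrix}1&\mathbf{x}\\ \mathbf{0}&G\end{pmatrix}$. If $wt(\mathbf{x})$ is even, then $C'$ is a quaternary Hermitian LCD $[n+1,k+1]$ code.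
   Context: Binary, ternary, quaternary codes are linear codes over $\mathbb{F}_2,\mathbb{F}_3,\mathbb{F}_4$. An $[n,k]$ code is a $k$-dimensional subspace of $\mathbb{F}_q^n$; a generator matrix is a $k\times n$ matrix whose rows form a basis. $wt(\mathbf{x})$ is the Hamming weight (number of nonzero coordinates). Euclidean inner product $\langle x,y\rangle_E=\sum x_iy_i$ with dual $C^{\perp_E}$; on $\mathbb{F}_4^n$ the Hermitian inner product is $\langle x,y\rangle_H=\sum x_iy_i^2$ with dual $C^{\perp_H}$. A code is (Euclidean/Hermitian) LCD if $C\cap C^{\perp}=\{0\}$. In $G'$, $\mathbf{0}$ denotes the zero column of length $k$. *)

theory Defs
  imports Main "HOL-Library.Cardinality"
begin

text \<open>Vectors of length n over a field are modelled as functions nat => 'a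
  that vanish at all coordinates j >= n.  A k x n matrix is a function
  nat => nat => 'a, entry (i,j) with i < k, j < n.\<close>

definition vecs :: "nat \<Rightarrow> (nat \<Rightarrow> 'a::zero) set" where
  "vecs n = {v. \<forall>j. n \<le> j \<longrightarrow> v j = 0}"

definition lincomb :: "nat \<Rightarrow> nat \<Rightarrow> (nat \<Rightarrow> nat \<Rightarrow> 'a::comm_ring_1) \<Rightarrow> (nat \<Rightarrow> 'a) \<Rightarrow> (nat \<Rightarrow> 'a)" where
  "lincomb k n G c = (\<lambda>j. if j < n then (\<Sum>i<k. c i * G i j) else 0)"

definition gen_code :: "nat \<Rightarrow> nat \<Rightarrow> (nat \<Rightarrow> nat \<Rightarrow> 'a::comm_ring_1) \<Rightarrow> (nat \<Rightarrow> 'a) set" where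
  "gen_code k n G = {lincomb k n G c | c. True}"

definition rows_indep :: "nat \<Rightarrow> nat \<Rightarrow> (nat \<Rightarrow> nat \<Rightarrow> 'a::comm_ring_1) \<Rightarrow> bool" where
  "rows_indep k n G \<longleftrightarrow> (\<forall>c. lincomb k n G c = (\<lambda>_. 0) \<longrightarrow> (\<forall>i<k. c i = 0))"

definition is_generator_matrix :: "nat \<Rightarrow> nat \<Rightarrow> (nat \<Rightarrow> nat \<Rightarrow> 'a::comm_ring_1) \<Rightarrow> (nat \<Rightarrow> 'a) set \<Rightarrow> bool" where
  "is_generator_matrix k n G C \<longleftrightarrow> rows_indep k n G \<and> C = gen_code k n G"

definition wt :: "nat \<Rightarrow> (nat \<Rightarrow> 'a::zero) \<Rightarrow> nat" where
  "wt n x = card {j. j < n \<and> x j \<noteq> 0}"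

definition ip_E :: "nat \<Rightarrow> (nat \<Rightarrow> 'a::comm_ring_1) \<Rightarrow> (nat \<Rightarrow> 'a) \<Rightarrow> 'a" where
  "ip_E n x y = (\<Sum>j<n. x j * y j)"

definition ip_H :: "nat \<Rightarrow> (nat \<Rightarrow> 'a::comm_ring_1) \<Rightarrow> (nat \<Rightarrow> 'a) \<Rightarrow> 'a" where
  "ip_H n x y = (\<Sum>j<n. x j * (y j) ^ 2)"

definition dual_E :: "nat \<Rightarrow> (nat \<Rightarrow> 'a::comm_ring_1) set \<Rightarrow> (nat \<Rightarrow> 'a) set" where
  "dual_E n C = {y \<in> vecs n. \<forall>x\<in>C. ip_E n x y = 0}"

definition dual_H :: "nat \<Rightarrow> (nat \<Rightarrow> 'a::comm_ring_1) set \<Rightarrow> (nat \<Rightarrow> 'a) set" where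
  "dual_H n C = {y \<in> vecs n. \<forall>x\<in>C. ip_H n x y = 0}"

definition LCD_E :: "nat \<Rightarrow> (nat \<Rightarrow> 'a::comm_ring_1) set \<Rightarrow> bool" where
  "LCD_E n C \<longleftrightarrow> C \<inter> dual_E n C = {\<lambda>_. 0}"

definition LCD_H :: "nat \<Rightarrow> (nat \<Rightarrow> 'a::comm_ring_1) set \<Rightarrow> bool" where
  "LCD_H n C \<longleftrightarrow> C \<inter> dual_H n C = {\<lambda>_. 0}"

definition ext_matrix :: "(nat \<Rightarrow> nat \<Rightarrow> 'a::comm_ring_1) \<Rightarrow> (nat \<Rightarrow> 'a) \<Rightarrow> nat \<Rightarrow> nat \<Rightarrow> 'a" where
  "ext_matrix G x i j =
     (if i = 0 then (if j = 0 then 1 else x (j - 1))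
      else (if j = 0 then 0 else G (i - 1) (j - 1)))"

end

theory Submission
  imports Defs
begin

lemma ff_fermat:
  fixes a :: "'a::{field,finite}"
  assumes "a \<noteq> 0"
  shows "a ^ (CARD('a) - 1) = 1"
proof -
  let ?S = "UNIV - {0::'a}"
  have inj: "inj_on ((*) a) ?S" using assms by (auto simp: inj_on_def)
  have im: "(*) a ` ?S = ?S"
  proof
    show "(*) a ` ?S \<subseteq> ?S" using assms by auto
    show "?S \<subseteq> (*) a ` ?S"
    proof
      fix y assume "y \<in> ?S"
      then have "y = a * (y / a)" "y / a \<in> ?S" using assms by auto
      then show "y \<in> (*) a ` ?S" by blast
    qed
  qed
  have "prod id ?S = prod id ((*) a ` ?S)" using im by simp
  also have "\<dots> = prod ((*) a) ?S" using prod.reindex[OF inj, of id] by simp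
  also have "\<dots> = a ^ card ?S * prod id ?S" by (simp add: prod.distrib)
  finally have e: "prod id ?S = a ^ card ?S * prod id ?S" .
  have nz: "prod id ?S \<noteq> 0" by simp
  have "card ?S = CARD('a) - 1" by (simp add: card_Diff_subset)
  with e nz show ?thesis by (metis mult_cancel_right1)
qed

lemma ff_char:
  shows "(of_nat CARD('a) :: 'a::{field,finite}) = 0"
proof -
  let ?f = "\<lambda>y::'a. 1 + y"
  have inj: "inj ?f" by (auto simp: inj_on_def)
  have im: "?f ` UNIV = UNIV" by (metis UNIV_I add.commute diff_add_cancel image_eqI subsetI subset_antisym top_greatest)
  have "sum id (UNIV::'a set) = sum id (?f ` UNIV)" using im by simp
  also have "\<dots> = sum ?f UNIV" using sum.reindex[OF inj, of id] by simp
  also have "\<dots> = of_nat CARD('a) + sum id UNIV" by (simp add: sum.distrib)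
  finally show ?thesis by simp
qed

lemma sum_ind_wt:
  "(\<Sum>j<n. (if x j = 0 then 0 else 1)) = (of_nat (wt n x) :: 'a::comm_ring_1)"
  unfolding wt_def
proof (induction n)
  case 0 then show ?case by simp
next
  case (Suc n)
  have "{j. j < Suc n \<and> x j \<noteq> 0} = {j. j < n \<and> x j \<noteq> 0} \<union> (if x n = 0 then {} else {n})"
    by (auto simp: less_Suc_eq)
  then show ?case using Suc by auto
qed


definition ext_vec :: "'a::comm_ring_1 \<Rightarrow> (nat\<Rightarrow>'a) \<Rightarrow> (nat\<Rightarrow>'a) \<Rightarrow> nat \<Rightarrow> 'a" where
  "ext_vec a x u j = (if j = 0 then a else a * x (j-1) + u (j-1))"

lemma lincomb_ext:
  assumes "x \<in> vecs n"
  shows "lincomb (Suc k) (Suc n) (ext_matrix G x) c = ext_vec (c 0) x (lincomb k n G (\<lambda>i. c (Suc i)))"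
proof
  fix j
  show "lincomb (Suc k) (Suc n) (ext_matrix G x) c j = ext_vec (c 0) x (lincomb k n G (\<lambda>i. c (Suc i))) j"
  proof (cases j)
    case 0 then show ?thesis
      by (simp add: lincomb_def ext_vec_def ext_matrix_def sum.lessThan_Suc_shift del: sum.lessThan_Suc)
  next
    case (Suc m)
    then show ?thesis using assms
      by (simp add: lincomb_def ext_vec_def ext_matrix_def sum.lessThan_Suc_shift vecs_def del: sum.lessThan_Suc)
  qed
qed

lemma gen_code_ext:
  assumes "x \<in> vecs n"
  shows "gen_code (Suc k) (Suc n) (ext_matrix G x) = {ext_vec a x u | a u. u \<in> gen_code k n G}"
proof
  show "gen_code (Suc k) (Suc n) (ext_matrix G x) \<subseteq> {ext_vec a x u | a u. u \<in> gen_code k n G}"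
    using lincomb_ext[OF assms] unfolding gen_code_def by blast
next
  show "{ext_vec a x u | a u. u \<in> gen_code k n G} \<subseteq> gen_code (Suc k) (Suc n) (ext_matrix G x)"
  proof
    fix v assume "v \<in> {ext_vec a x u | a u. u \<in> gen_code k n G}"
    then obtain a c where v: "v = ext_vec a x (lincomb k n G c)" unfolding gen_code_def by blast
    define c' where "c' = (\<lambda>i. if i = 0 then a else c (i - 1))"
    have "lincomb (Suc k) (Suc n) (ext_matrix G x) c' = v"
      using lincomb_ext[OF assms, of k G c'] v by (simp add: c'_def)
    then show "v \<in> gen_code (Suc k) (Suc n) (ext_matrix G x)" unfolding gen_code_def by blast
  qed
qed

lemma rows_indep_ext:
  assumes "x \<in> vecs n" "rows_indep k n G"
  shows "rows_indep (Suc k) (Suc n) (ext_matrix G x)"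
  unfolding rows_indep_def
proof (rule allI, rule impI)
  fix c assume h: "lincomb (Suc k) (Suc n) (ext_matrix G x) c = (\<lambda>_. 0)"
  then have h2: "ext_vec (c 0) x (lincomb k n G (\<lambda>i. c (Suc i))) = (\<lambda>_. 0)"
    using lincomb_ext[OF assms(1)] by metis
  then have c0: "c 0 = 0" by (metis ext_vec_def)
  have "lincomb k n G (\<lambda>i. c (Suc i)) = (\<lambda>_. 0)"
  proof
    fix j
    have "ext_vec (c 0) x (lincomb k n G (\<lambda>i. c (Suc i))) (Suc j) = 0" using h2 by metis
    then show "lincomb k n G (\<lambda>i. c (Suc i)) j = 0" using c0 by (simp add: ext_vec_def)
  qed
  from assms(2)[unfolded rows_indep_def, rule_format, OF this]
  have "\<forall>i<k. c (Suc i) = 0" by simp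
  with c0 show "\<forall>i<Suc k. c i = 0" by (auto simp: less_Suc_eq_0_disj)
qed

lemma gen_code_vecs: "u \<in> gen_code k n G \<Longrightarrow> u \<in> vecs n"
  by (auto simp: gen_code_def vecs_def lincomb_def)

lemma zero_gen_code: "(\<lambda>_. 0) \<in> gen_code k n G"
proof -
  have "lincomb k n G (\<lambda>_. 0) = (\<lambda>_. 0)" by (simp add: lincomb_def fun_eq_iff)
  then show ?thesis unfolding gen_code_def by (metis (mono_tags, lifting) mem_Collect_eq)
qed

lemma ext_vec_zero: "ext_vec 0 x (\<lambda>_. 0) = (\<lambda>_. 0)"
  by (simp add: ext_vec_def fun_eq_iff)

lemma ipE_ext: "ip_E (Suc n) (ext_vec a x u) (ext_vec b x w)
   = a*b + ip_E n (\<lambda>j. a*x j + u j) (\<lambda>j. b * x j + w j)"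
  by (simp add: ip_E_def ext_vec_def sum.lessThan_Suc_shift del: sum.lessThan_Suc)

lemma ipH_ext: "ip_H (Suc n) (ext_vec a x u) (ext_vec b x w)
   = a*b^2 + ip_H n (\<lambda>j. a*x j + u j) (\<lambda>j. b * x j + w j)"
  by (simp add: ip_H_def ext_vec_def sum.lessThan_Suc_shift del: sum.lessThan_Suc)

lemma sq_add: "(2::'a::comm_ring_1) = 0 \<Longrightarrow> (p+q)^2 = p^2 + (q::'a)^2"
  by (simp add: power2_sum)

lemma main_E:
  fixes G :: "nat \<Rightarrow> nat \<Rightarrow> 'a::field"
  assumes gm: "is_generator_matrix k n G C" and lcd: "LCD_E n C" and xd: "x \<in> dual_E n C"
    and nz: "1 + ip_E n x x \<noteq> 0"
  shows "is_generator_matrix (k+1) (n+1) (ext_matrix G x) (gen_code (k+1) (n+1) (ext_matrix G x))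
       \<and> LCD_E (n+1) (gen_code (k+1) (n+1) (ext_matrix G x))"
proof -
  have xv: "x \<in> vecs n" using xd by (simp add: dual_E_def)
  have C: "C = gen_code k n G" and ri: "rows_indep k n G" using gm by (auto simp: is_generator_matrix_def)
  let ?C' = "gen_code (Suc k) (Suc n) (ext_matrix G x)"
  have C': "?C' = {ext_vec a x u | a u. u \<in> C}" using gen_code_ext[OF xv] C by simp
  have "?C' \<inter> dual_E (Suc n) ?C' = {\<lambda>_. 0}"
  proof
    show "{\<lambda>_. 0} \<subseteq> ?C' \<inter> dual_E (Suc n) ?C'"
    proof -
      have "(\<lambda>_. 0) \<in> ?C'" by (rule zero_gen_code)
      moreover have "(\<lambda>_. 0) \<in> dual_E (Suc n) ?C'" by (simp add: dual_E_def vecs_def ip_E_def)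
      ultimately show ?thesis by blast
    qed
  next
    show "?C' \<inter> dual_E (Suc n) ?C' \<subseteq> {\<lambda>_. 0}"
    proof
      fix v assume v: "v \<in> ?C' \<inter> dual_E (Suc n) ?C'"
      then obtain a u where vu: "v = ext_vec a x u" and uC: "u \<in> C" using C' by blast
      have orth: "ip_E (Suc n) w v = 0" if "w \<in> ?C'" for w using v that by (simp add: dual_E_def)
      have "ip_E n g u = 0" if gC: "g \<in> C" for g
      proof -
        have "ext_vec 0 x g \<in> ?C'" using C' gC by blast
        then have "ip_E (Suc n) (ext_vec 0 x g) v = 0" by (rule orth)
        then have e: "ip_E n g (\<lambda>j. a * x j + u j) = 0" by (simp add: vu ipE_ext)
        have "ip_E n g (\<lambda>j. a * x j + u j) = a * ip_E n g x + ip_E n g u"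
          by (simp add: ip_E_def algebra_simps sum.distrib sum_distrib_left)
        moreover have "ip_E n g x = 0" using xd gC by (simp add: dual_E_def)
        ultimately show ?thesis using e by simp
      qed
      then have "u \<in> dual_E n C" using gen_code_vecs uC C by (simp add: dual_E_def)
      then have u0: "u = (\<lambda>_. 0)" using uC lcd by (auto simp: LCD_E_def)
      have "ext_vec 1 x (\<lambda>_. 0) \<in> ?C'" using C' zero_gen_code C by blast
      then have "ip_E (Suc n) (ext_vec 1 x (\<lambda>_. 0)) v = 0" by (rule orth)
      then have "a + ip_E n x (\<lambda>j. a * x j) = 0" by (simp add: vu u0 ipE_ext)
      moreover have "ip_E n x (\<lambda>j. a * x j) = a * ip_E n x x"
        by (simp add: ip_E_def algebra_simps sum_distrib_left)
      ultimately have "a * (1 + ip_E n x x) = 0" by (simp add: algebra_simps)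
      then have "a = 0" using nz by simp
      then show "v \<in> {\<lambda>_. 0}" using vu u0 ext_vec_zero by simp
    qed
  qed
  then show ?thesis using rows_indep_ext[OF xv ri]
    by (simp add: is_generator_matrix_def LCD_E_def)
qed

lemma main_H:
  fixes G :: "nat \<Rightarrow> nat \<Rightarrow> 'a::field"
  assumes gm: "is_generator_matrix k n G C" and lcd: "LCD_H n C" and xd: "x \<in> dual_H n C"
    and nz: "1 + ip_H n x x \<noteq> 0" and two: "(2::'a) = 0"
  shows "is_generator_matrix (k+1) (n+1) (ext_matrix G x) (gen_code (k+1) (n+1) (ext_matrix G x))
       \<and> LCD_H (n+1) (gen_code (k+1) (n+1) (ext_matrix G x))"
proof -
  have xv: "x \<in> vecs n" using xd by (simp add: dual_H_def)
  have C: "C = gen_code k n G" and ri: "rows_indep k n G" using gm by (auto simp: is_generator_matrix_def)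
  let ?C' = "gen_code (Suc k) (Suc n) (ext_matrix G x)"
  have C': "?C' = {ext_vec a x u | a u. u \<in> C}" using gen_code_ext[OF xv] C by simp
  have "?C' \<inter> dual_H (Suc n) ?C' = {\<lambda>_. 0}"
  proof
    show "{\<lambda>_. 0} \<subseteq> ?C' \<inter> dual_H (Suc n) ?C'"
    proof -
      have "(\<lambda>_. 0) \<in> ?C'" by (rule zero_gen_code)
      moreover have "(\<lambda>_. 0) \<in> dual_H (Suc n) ?C'" by (simp add: dual_H_def vecs_def ip_H_def)
      ultimately show ?thesis by blast
    qed
  next
    show "?C' \<inter> dual_H (Suc n) ?C' \<subseteq> {\<lambda>_. 0}"
    proof
      fix v assume v: "v \<in> ?C' \<inter> dual_H (Suc n) ?C'"
      then obtain a u where vu: "v = ext_vec a x u" and uC: "u \<in> C" using C' by blast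
      have orth: "ip_H (Suc n) w v = 0" if "w \<in> ?C'" for w using v that by (simp add: dual_H_def)
      have "ip_H n g u = 0" if gC: "g \<in> C" for g
      proof -
        have "ext_vec 0 x g \<in> ?C'" using C' gC by blast
        then have "ip_H (Suc n) (ext_vec 0 x g) v = 0" by (rule orth)
        then have e: "ip_H n g (\<lambda>j. a * x j + u j) = 0" by (simp add: vu ipH_ext)
        have "ip_H n g (\<lambda>j. a * x j + u j) = (\<Sum>j<n. g j * ((a * x j)^2 + (u j)^2))"
          unfolding ip_H_def using sq_add[OF two] by simp
        also have "\<dots> = a^2 * ip_H n g x + ip_H n g u"
          by (simp add: ip_H_def algebra_simps sum.distrib sum_distrib_left power_mult_distrib)
        finally have "ip_H n g (\<lambda>j. a * x j + u j) = a^2 * ip_H n g x + ip_H n g u" .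
        moreover have "ip_H n g x = 0" using xd gC by (simp add: dual_H_def)
        ultimately show ?thesis using e by simp
      qed
      then have "u \<in> dual_H n C" using gen_code_vecs uC C by (simp add: dual_H_def)
      then have u0: "u = (\<lambda>_. 0)" using uC lcd by (auto simp: LCD_H_def)
      have "ext_vec 1 x (\<lambda>_. 0) \<in> ?C'" using C' zero_gen_code C by blast
      then have "ip_H (Suc n) (ext_vec 1 x (\<lambda>_. 0)) v = 0" by (rule orth)
      then have "a^2 + ip_H n x (\<lambda>j. a * x j) = 0" by (simp add: vu u0 ipH_ext)
      moreover have "ip_H n x (\<lambda>j. a * x j) = a^2 * ip_H n x x"
        by (simp add: ip_H_def algebra_simps sum_distrib_left power_mult_distrib)
      ultimately have "a^2 * (1 + ip_H n x x) = 0" by (simp add: algebra_simps)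
      then have "a = 0" using nz by simp
      then show "v \<in> {\<lambda>_. 0}" using vu u0 ext_vec_zero by simp
    qed
  qed
  then show ?thesis using rows_indep_ext[OF xv ri]
    by (simp add: is_generator_matrix_def LCD_H_def)
qed


lemma ipE_self_wt:
  fixes x :: "nat \<Rightarrow> 'a::comm_ring_1"
  assumes "\<And>a::'a. a \<noteq> 0 \<Longrightarrow> a * a = 1"
  shows "ip_E n x x = of_nat (wt n x)"
proof -
  have "ip_E n x x = (\<Sum>j<n. (if x j = 0 then 0 else 1))"
    unfolding ip_E_def
  proof (rule sum.cong)
    fix j
    show "x j * x j = (if x j = 0 then 0 else 1)"
    proof (cases "x j = 0")
      case True then show ?thesis by simp
    next
      case False then show ?thesis using assms[OF False] by simp
    qed
  qed simp
  then show ?thesis by (simp add: sum_ind_wt)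
qed

lemma ipH_self_wt:
  fixes x :: "nat \<Rightarrow> 'a::comm_ring_1"
  assumes "\<And>a::'a. a \<noteq> 0 \<Longrightarrow> a * a^2 = 1"
  shows "ip_H n x x = of_nat (wt n x)"
proof -
  have "ip_H n x x = (\<Sum>j<n. (if x j = 0 then 0 else 1))"
    unfolding ip_H_def
  proof (rule sum.cong)
    fix j
    show "x j * (x j)^2 = (if x j = 0 then 0 else 1)"
    proof (cases "x j = 0")
      case True then show ?thesis by simp
    next
      case False then show ?thesis using assms[OF False] by simp
    qed
  qed simp
  then show ?thesis by (simp add: sum_ind_wt)
qed


lemma case2:
  fixes x :: "nat \<Rightarrow> 'a::{field,finite}"
  assumes "CARD('a) = 2" "even (wt n x)"
  shows "1 + ip_E n x x \<noteq> 0"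
proof -
  have "ip_E n x x = of_nat (wt n x)"
  proof (rule ipE_self_wt)
    fix a :: 'a assume "a \<noteq> 0"
    then have "a = 1" using ff_fermat[of a] assms(1) by simp
    then show "a * a = 1" by simp
  qed
  moreover have "(of_nat 2 :: 'a) = 0" using ff_char assms(1) by metis
  moreover obtain m where "wt n x = 2 * m" using assms(2) by blast
  ultimately show ?thesis by simp
qed

lemma case3:
  fixes x :: "nat \<Rightarrow> 'a::{field,finite}"
  assumes "CARD('a) = 3" "wt n x mod 3 \<noteq> 2"
  shows "1 + ip_E n x x \<noteq> 0"
proof -
  have ip: "ip_E n x x = of_nat (wt n x)"
  proof (rule ipE_self_wt)
    fix a :: 'a assume "a \<noteq> 0"
    then have "a^2 = 1" using ff_fermat[of a] assms(1) by simp
    then show "a * a = 1" by (simp add: power2_eq_square)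
  qed
  have "(of_nat CARD('a) :: 'a) = 0" by (rule ff_char)
  then have three: "(of_nat 3 :: 'a) = 0" using assms(1) by simp
  define q where "q = wt n x div 3"
  define r where "r = wt n x mod 3"
  have wqr: "wt n x = 3 * q + r" unfolding q_def r_def by simp
  have "(of_nat (wt n x) :: 'a) = of_nat 3 * of_nat q + of_nat r"
    unfolding wqr by (simp only: of_nat_add of_nat_mult)
  also have "\<dots> = of_nat r" using three by simp
  finally have w: "(of_nat (wt n x) :: 'a) = of_nat r" .
  have r01: "r = 0 \<or> r = 1" using assms(2) unfolding r_def by linarith
  have two: "(2::'a) \<noteq> 0"
  proof
    assume "(2::'a) = 0"
    moreover have "(3::'a) = 2 + 1" by simp
    ultimately have "(3::'a) = 1" by simp
    with three show False by simp
  qed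
  show ?thesis
  proof (cases "r = 0")
    case True then show ?thesis using ip w by simp
  next
    case False
    then have "r = 1" using r01 by simp
    then have "1 + ip_E n x x = 1 + 1" using ip w by simp
    then show ?thesis using two by (simp add: one_add_one)
  qed
qed

lemma case4:
  fixes x :: "nat \<Rightarrow> 'a::{field,finite}"
  assumes "CARD('a) = 4" "even (wt n x)"
  shows "1 + ip_H n x x \<noteq> 0" and "(2::'a) = 0"
proof -
  have "(of_nat 4 :: 'a) = 0" using ff_char assms(1) by metis
  moreover have "(of_nat 4 :: 'a) = 2 * 2" by simp
  ultimately have "(2::'a) * 2 = 0" by simp
  then show two: "(2::'a) = 0" using mult_eq_0_iff[of "2::'a" "2"] by blast
  have "ip_H n x x = of_nat (wt n x)"
  proof (rule ipH_self_wt)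
    fix a :: 'a assume "a \<noteq> 0"
    then have "a^3 = 1" using ff_fermat[of a] assms(1) by simp
    then show "a * a^2 = 1" by (metis power_Suc numeral_3_eq_3 numeral_2_eq_2)
  qed
  moreover obtain m where "wt n x = 2 * m" using assms(2) by blast
  ultimately show "1 + ip_H n x x \<noteq> 0" using two by simp
qed

theorem theorem3p5:
  fixes G2 :: "nat \<Rightarrow> nat \<Rightarrow> 'a::{field,finite}" and C2 :: "(nat \<Rightarrow> 'a) set" and x2 :: "nat \<Rightarrow> 'a"
    and G3 :: "nat \<Rightarrow> nat \<Rightarrow> 'b::{field,finite}" and C3 :: "(nat \<Rightarrow> 'b) set" and x3 :: "nat \<Rightarrow> 'b"
    and G4 :: "nat \<Rightarrow> nat \<Rightarrow> 'c::{field,finite}" and C4 :: "(nat \<Rightarrow> 'c) set" and x4 :: "nat \<Rightarrow> 'c"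
    and n k :: nat
  shows
   "(CARD('a) = 2 \<and> is_generator_matrix k n G2 C2 \<and> LCD_E n C2 \<and> x2 \<in> dual_E n C2
       \<and> even (wt n x2)
     \<longrightarrow> is_generator_matrix (k+1) (n+1) (ext_matrix G2 x2) (gen_code (k+1) (n+1) (ext_matrix G2 x2))
       \<and> LCD_E (n+1) (gen_code (k+1) (n+1) (ext_matrix G2 x2)))
  \<and> (CARD('b) = 3 \<and> is_generator_matrix k n G3 C3 \<and> LCD_E n C3 \<and> x3 \<in> dual_E n C3
       \<and> wt n x3 mod 3 \<noteq> 2
     \<longrightarrow> is_generator_matrix (k+1) (n+1) (ext_matrix G3 x3) (gen_code (k+1) (n+1) (ext_matrix G3 x3))
       \<and> LCD_E (n+1) (gen_code (k+1) (n+1) (ext_matrix G3 x3)))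
  \<and> (CARD('c) = 4 \<and> is_generator_matrix k n G4 C4 \<and> LCD_H n C4 \<and> x4 \<in> dual_H n C4
       \<and> even (wt n x4)
     \<longrightarrow> is_generator_matrix (k+1) (n+1) (ext_matrix G4 x4) (gen_code (k+1) (n+1) (ext_matrix G4 x4))
       \<and> LCD_H (n+1) (gen_code (k+1) (n+1) (ext_matrix G4 x4)))"
proof (intro conjI impI)
  assume h: "CARD('a) = 2 \<and> is_generator_matrix k n G2 C2 \<and> LCD_E n C2 \<and> x2 \<in> dual_E n C2 \<and> even (wt n x2)"
  then have nz: "1 + ip_E n x2 x2 \<noteq> 0" using case2 by blast
  from h have a: "is_generator_matrix k n G2 C2" "LCD_E n C2" "x2 \<in> dual_E n C2" by auto
  from main_E[OF a nz]
  show "is_generator_matrix (k+1) (n+1) (ext_matrix G2 x2) (gen_code (k+1) (n+1) (ext_matrix G2 x2))"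
    "LCD_E (n+1) (gen_code (k+1) (n+1) (ext_matrix G2 x2))" by auto
next
  assume h: "CARD('b) = 3 \<and> is_generator_matrix k n G3 C3 \<and> LCD_E n C3 \<and> x3 \<in> dual_E n C3 \<and> wt n x3 mod 3 \<noteq> 2"
  then have nz: "1 + ip_E n x3 x3 \<noteq> 0" using case3 by blast
  from h have a: "is_generator_matrix k n G3 C3" "LCD_E n C3" "x3 \<in> dual_E n C3" by auto
  from main_E[OF a nz]
  show "is_generator_matrix (k+1) (n+1) (ext_matrix G3 x3) (gen_code (k+1) (n+1) (ext_matrix G3 x3))"
    "LCD_E (n+1) (gen_code (k+1) (n+1) (ext_matrix G3 x3))" by auto
next
  assume h: "CARD('c) = 4 \<and> is_generator_matrix k n G4 C4 \<and> LCD_H n C4 \<and> x4 \<in> dual_H n C4 \<and> even (wt n x4)"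
  then have nz: "1 + ip_H n x4 x4 \<noteq> 0" and two: "(2::'c) = 0" using case4 by blast+
  from h have a: "is_generator_matrix k n G4 C4" "LCD_H n C4" "x4 \<in> dual_H n C4" by auto
  from main_H[OF a nz two]
  show "is_generator_matrix (k+1) (n+1) (ext_matrix G4 x4) (gen_code (k+1) (n+1) (ext_matrix G4 x4))"
    "LCD_H (n+1) (gen_code (k+1) (n+1) (ext_matrix G4 x4))" by auto
qed

end
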